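(* Let $f=(f_1,\dots,f_P)^\top:\mathbb{R}^N\to\mathbb{R}^P$ and $g=(g_1,\dots,g_M)^\top:\mathbb{R}^N\to\mathbb{R}^M$ satisfy: each $f_i$ is strictly convex and continuously differentiable; each $g_j$ is convex and continuously differentiable; the problem $\min\{f(x)\mid x\in\mathbb{X}\}$ with $\mathbb{X}:=\{x\mid g_j(x)\le 0,\ j=1,\dots,M\}$ is bounded; and Slater's condition holds. Let $\mathcal{P}$ be its upper image. Let $\tilde{\mathcal{P}}\subseteq\mathbb{R}^P$ be a closed and convex upper set and let $\epsilon:\mathcal{W}\to\mathbb{R}_+$ be constant, $\epsilon(w)\equiv\epsilon_0>0$. Then $\tilde{\mathcal{P}}$ is an $\epsilon(\cdot)$-inner approximation of $\mathcal{P}$ if and only if $\tilde{\mathcal{P}}\subseteq\mathcal{P}\subseteq\tilde{\mathcal{P}}-\epsilon_0\mathbf{1}$.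
   Context: $\mathcal{W}:=\{w\in\mathbb{R}^P_+\mid\mathbf{1}^\top w=1\}$, $\mathbf{1}=(1,\dots,1)^\top\in\mathbb{R}^P$. Bounded: there is $y$ with $f(x)\in y+\mathbb{R}^P_+$ for all $x\in\mathbb{X}$. Slater's condition: some $\bar x$ has $g_j(\bar x)<0$ for all $j$. A weak minimizer is $x^*\in\mathbb{X}$ with no $x\in\mathbb{X}$ satisfying $f(x^* )-f(x)\in\mathbb{R}^P_{++}$; with $\mathcal{X}$ the set of weak minimizers, the upper image is $\mathcal{P}:=\operatorname{cl}(f[\mathcal{X}]+\mathbb{R}^P_+)$. An upper set is a set $A$ with $A+\mathbb{R}^P_+= A$. For $w\in\mathcal{W}$ let $G(w):=\{y\in\mathbb{R}^P\mid w^\top y\ge 0\}$. Given $\epsilon:\mathcal{W}\to\mathbb{R}_+$, a set $\tilde{\mathcal{P}}\subseteq\mathbb{R}^P$ is an $\epsilon(\cdot)$-inner approximation (of $\mathcal{P}$) if $\tilde{\mathcal{P}}\subseteq\mathcal{P}\subseteq\bigcap_{w\in\mathcal{W}}\operatorname{cl}\left[\tilde{\mathcal{P}}-\epsilon(w)\mathbf{1}+G(w)\right]$. *)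

theory Defs
  imports "HOL-Analysis.Analysis"
begin

definition strictly_convex_on :: "'a::real_vector set \<Rightarrow> ('a \<Rightarrow> real) \<Rightarrow> bool" where
  "strictly_convex_on S h \<longleftrightarrow> convex S \<and>
     (\<forall>x\<in>S. \<forall>y\<in>S. \<forall>t::real. x \<noteq> y \<and> 0 < t \<and> t < 1 \<longrightarrow>
        h ((1 - t) *\<^sub>R x + t *\<^sub>R y) < (1 - t) * h x + t * h y)"

definition cont_diff :: "('a::real_normed_vector \<Rightarrow> real) \<Rightarrow> bool" where
  "cont_diff h \<longleftrightarrow> (\<exists>h'::'a \<Rightarrow> ('a \<Rightarrow>\<^sub>L real).
      (\<forall>x. (h has_derivative blinfun_apply (h' x)) (at x)) \<and> continuous_on UNIV h')"

definition nonneg_orthant :: "(real^'p) set" where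
  "nonneg_orthant = {y. \<forall>i. 0 \<le> y $ i}"

definition pos_orthant :: "(real^'p) set" where
  "pos_orthant = {y. \<forall>i. 0 < y $ i}"

definition ones :: "real^'p" where
  "ones = (\<chi> i. 1)"

definition msum :: "(real^'p) set \<Rightarrow> (real^'p) set \<Rightarrow> (real^'p) set" where
  "msum A B = {a + b | a b. a \<in> A \<and> b \<in> B}"

definition weights :: "(real^'p) set" where
  "weights = {w. (\<forall>i. 0 \<le> w $ i) \<and> sum (\<lambda>i. w $ i) UNIV = 1}"

text \<open>Feasible set X = {x | g_j x \<le> 0, j = 1..M}; constraints indexed by j < M.\<close>
definition feasible :: "nat \<Rightarrow> (nat \<Rightarrow> real^'n \<Rightarrow> real) \<Rightarrow> (real^'n) set" where
  "feasible M g = {x. \<forall>j<M. g j x \<le> 0}"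

definition bounded_problem :: "(real^'n \<Rightarrow> real^'p) \<Rightarrow> (real^'n) set \<Rightarrow> bool" where
  "bounded_problem f X \<longleftrightarrow> (\<exists>y. \<forall>x\<in>X. f x \<in> msum {y} nonneg_orthant)"

definition slater :: "nat \<Rightarrow> (nat \<Rightarrow> real^'n \<Rightarrow> real) \<Rightarrow> bool" where
  "slater M g \<longleftrightarrow> (\<exists>xb. \<forall>j<M. g j xb < 0)"

definition weak_minimizers :: "(real^'n \<Rightarrow> real^'p) \<Rightarrow> (real^'n) set \<Rightarrow> (real^'n) set" where
  "weak_minimizers f X = {xs \<in> X. \<not> (\<exists>x\<in>X. f xs - f x \<in> pos_orthant)}"

definition upper_image :: "(real^'n \<Rightarrow> real^'p) \<Rightarrow> (real^'n) set \<Rightarrow> (real^'p) set" where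
  "upper_image f X = closure (msum (f ` weak_minimizers f X) nonneg_orthant)"

definition upper_set :: "(real^'p) set \<Rightarrow> bool" where
  "upper_set A \<longleftrightarrow> msum A nonneg_orthant = A"

definition halfspace_G :: "real^'p \<Rightarrow> (real^'p) set" where
  "halfspace_G w = {y. w \<bullet> y \<ge> 0}"

definition inner_approx :: "(real^'p) set \<Rightarrow> (real^'p) set \<Rightarrow> (real^'p \<Rightarrow> real) \<Rightarrow> bool" where
  "inner_approx Pt P eps \<longleftrightarrow> Pt \<subseteq> P \<and>
     P \<subseteq> (\<Inter>w\<in>weights. closure (msum ((\<lambda>p. p - eps w *\<^sub>R ones) ` Pt) (halfspace_G w)))"

end

theory Submission
  imports Defs
begin

lemma key_sep:
  fixes A :: "(real^'p) set" and y :: "real^'p"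
  assumes cl: "closed A" and cv: "convex A"
    and up: "\<And>x v. x \<in> A \<Longrightarrow> (\<forall>i. 0 \<le> v $ i) \<Longrightarrow> x + v \<in> A"
    and yA: "y \<notin> A"
  shows "\<exists>w\<in>weights. y \<notin> closure (msum A (halfspace_G w))"
proof (cases "A = {}")
  case True
  have "((\<chi> i. 1 / real CARD('p)) :: real^'p) \<in> weights"
    by (simp add: weights_def)
  moreover have "msum A G = {}" for G using True by (simp add: msum_def)
  ultimately show ?thesis by auto
next
  case False
  then obtain x0 where x0: "x0 \<in> A" by auto
  obtain a b where ab: "inner a y < b" "\<forall>x\<in>A. inner a x > b"
    using separating_hyperplane_closed_point[OF cv cl yA] by blast
  have apos: "0 \<le> a $ i" for i
  proof (rule ccontr)
    assume "\<not> 0 \<le> a $ i"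
    hence neg: "a $ i < 0" by simp
    define t where "t = (inner a x0 - b) / (- a $ i) + 1"
    have "inner a x0 - b > 0" using ab(2) x0 by auto
    hence "(inner a x0 - b) / (- a $ i) \<ge> 0" using neg by (intro divide_nonneg_pos) auto
    hence tpos: "t \<ge> 0" unfolding t_def by simp
    have "x0 + axis i t \<in> A"
      using up[OF x0, of "axis i t"] tpos by (simp add: axis_def)
    hence "inner a (x0 + axis i t) > b" using ab(2) by blast
    moreover have "inner a (x0 + axis i t) = inner a x0 + a $ i * t"
      by (simp add: inner_add_right inner_axis)
    moreover have "a $ i * t = -(inner a x0 - b) + a $ i"
      unfolding t_def using neg by (simp add: field_simps)
    ultimately show False using neg by linarith
  qed
  define S where "S = sum (\<lambda>i. a $ i) UNIV"
  have S0: "S \<ge> 0" unfolding S_def by (simp add: apos sum_nonneg)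
  have "S \<noteq> 0"
  proof
    assume "S = 0"
    hence "\<forall>i\<in>UNIV. a $ i = 0" unfolding S_def
      using sum_nonneg_eq_0_iff[of UNIV "\<lambda>i. a $ i"] apos by simp
    hence "a = 0" by (simp add: vec_eq_iff)
    hence "b < 0" "0 < b" using ab x0 by auto
    thus False by simp
  qed
  hence Spos: "S > 0" using S0 by simp
  define w where "w = (1 / S) *\<^sub>R a"
  have wW: "w \<in> weights" unfolding weights_def w_def
    using apos Spos by (simp add: S_def[symmetric] sum_divide_distrib[symmetric])
  have sub: "msum A (halfspace_G w) \<subseteq> {z. inner w z \<ge> b / S}"
  proof
    fix z assume "z \<in> msum A (halfspace_G w)"
    then obtain x g where z: "z = x + g" "x \<in> A" "inner w g \<ge> 0"
      unfolding msum_def halfspace_G_def by auto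
    have "inner w x = inner a x / S" unfolding w_def by simp
    moreover have "inner a x > b" using ab z by blast
    ultimately have "inner w x > b / S" using Spos by (simp add: divide_strict_right_mono)
    thus "z \<in> {z. inner w z \<ge> b / S}" using z by (simp add: inner_add_right)
  qed
  have "closure (msum A (halfspace_G w)) \<subseteq> {z. inner w z \<ge> b / S}"
    by (rule closure_minimal[OF sub closed_halfspace_ge])
  moreover have "inner w y < b / S" unfolding w_def using ab Spos
    by (simp add: divide_strict_right_mono)
  ultimately show ?thesis using wW by auto
qed

theorem proposition4p3:
  fixes f :: "real^'n \<Rightarrow> real^'p"
    and g :: "nat \<Rightarrow> real^'n \<Rightarrow> real"
    and M :: nat
    and Pt :: "(real^'p) set"
    and eps :: "real^'p \<Rightarrow> real"
    and eps0 :: real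
  assumes f_sconv: "\<And>i. strictly_convex_on UNIV (\<lambda>x. f x $ i)"
    and f_C1: "\<And>i. cont_diff (\<lambda>x. f x $ i)"
    and g_conv: "\<And>j. j < M \<Longrightarrow> convex_on UNIV (g j)"
    and g_C1: "\<And>j. j < M \<Longrightarrow> cont_diff (g j)"
    and bdd: "bounded_problem f (feasible M g)"
    and slater: "slater M g"
    and Pt_closed: "closed Pt"
    and Pt_convex: "convex Pt"
    and Pt_upper: "upper_set Pt"
    and eps0_pos: "eps0 > 0"
    and eps_const: "\<And>w. w \<in> weights \<Longrightarrow> eps w = eps0"
  shows "inner_approx Pt (upper_image f (feasible M g)) eps \<longleftrightarrow>
    (Pt \<subseteq> upper_image f (feasible M g) \<and>
     upper_image f (feasible M g) \<subseteq> (\<lambda>p. p - eps0 *\<^sub>R ones) ` Pt)"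
proof -
  define A where "A = (\<lambda>p. p - eps0 *\<^sub>R ones) ` Pt"
  define P where "P = upper_image f (feasible M g)"
  have Aeq: "(\<lambda>p. p - eps w *\<^sub>R ones) ` Pt = A" if "w \<in> weights" for w
    using eps_const[OF that] by (simp add: A_def)
  have Acl: "closed A" unfolding A_def
    using closed_translation[OF Pt_closed, of "- eps0 *\<^sub>R ones"] by (simp add: image_def)
  have Acv: "convex A" unfolding A_def
    using convex_translation[OF Pt_convex, of "- eps0 *\<^sub>R ones"] by (simp add: image_def)
  have Aup: "x + v \<in> A" if xA: "x \<in> A" and vn: "\<forall>i. 0 \<le> v $ i" for x v
  proof -
    obtain p where p: "p \<in> Pt" "x = p - eps0 *\<^sub>R ones" using xA unfolding A_def by auto
    have "p + v \<in> msum Pt nonneg_orthant" unfolding msum_def nonneg_orthant_def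
      using p vn by blast
    hence "p + v \<in> Pt" using Pt_upper unfolding upper_set_def by simp
    moreover have "x + v = (p + v) - eps0 *\<^sub>R ones" using p by simp
    ultimately show ?thesis unfolding A_def by blast
  qed
  have Isub: "(\<Inter>w\<in>weights. closure (msum A (halfspace_G w))) \<subseteq> A"
  proof
    fix y assume y: "y \<in> (\<Inter>w\<in>weights. closure (msum A (halfspace_G w)))"
    show "y \<in> A"
    proof (rule ccontr)
      assume "y \<notin> A"
      then obtain w where "w \<in> weights" "y \<notin> closure (msum A (halfspace_G w))"
        using key_sep[OF Acl Acv Aup] by blast
      thus False using y by blast
    qed
  qed
  have Isup: "A \<subseteq> (\<Inter>w\<in>weights. closure (msum A (halfspace_G w)))"
  proof (intro subsetI INT_I)
    fix x w assume "x \<in> A"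
    hence "x + 0 \<in> msum A (halfspace_G w)" unfolding msum_def halfspace_G_def by force
    thus "x \<in> closure (msum A (halfspace_G w))" using closure_subset by auto
  qed
  have I: "(\<Inter>w\<in>weights. closure (msum ((\<lambda>p. p - eps w *\<^sub>R ones) ` Pt) (halfspace_G w))) = A"
  proof -
    have "(\<Inter>w\<in>weights. closure (msum ((\<lambda>p. p - eps w *\<^sub>R ones) ` Pt) (halfspace_G w)))
      = (\<Inter>w\<in>weights. closure (msum A (halfspace_G w)))"
      by (rule INF_cong[OF refl]) (simp only: Aeq)
    also have "\<dots> = A" by (rule equalityI[OF Isub Isup])
    finally show ?thesis .
  qed
  show ?thesis unfolding inner_approx_def I by (simp add: A_def)
qed

end
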